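(* Let $\mathcal{K}'\subseteq\mathcal{K}\subseteq\mathbb{R}^d$ be two convex sets (compact, with nonempty interior). Let $\beta,\gamma$ be reals with $\beta>\gamma>1$ and $\beta>d$, and let $\alpha\ge 2(\gamma+1)\beta^2\sqrt{d}$. Let $G=\mathrm{grid}(\beta\mathcal{K}'\cap\mathcal{K},\alpha)$. Then: (1) for every $x\in\mathcal{K}'$ there exists $x_g\in G$ such that $x_g+\gamma(x_g-x)\in\frac{1}{2\beta}\mathcal{K}'$; (2) for every $x\in\mathcal{K}\setminus\mathcal{K}'$ there exists $x_g\in G$ such that $x_g+\frac{\gamma}{\mu(x,\mathcal{K}')}(x_g-x)\in\frac{1}{2\beta}\mathcal{K}'$.
   Context: For a convex compact set $C\subseteq\mathbb{R}^d$ with nonempty interior, let $\mathcal{E}_C=\{x_0+Vu:\|u\|_2\le1\}$ be its minimum volume enclosing ellipsoid (John ellipsoid), with center $x_0$ and $V$ invertible. The Minkowski distance of $x\in\mathbb{R}^d$ to $C$ is $\mu(x,C)=d\sqrt{(x-x_0)^\top(VV^\top)^{-1}(x-x_0)}$ (i.e. the gauge of $x-x_0$ with respect to the ellipsoid $\mathcal{E}_C$ shrunk by factor $1/d$ about its center). For $b>0$, the scaled set is $bC=\{y\in\mathbb{R}^d:\mu(y,C)\le b\}$. The grid $\mathrm{grid}(C,\alpha)$ is constructed as follows: let $\mathcal{E}'$ be the minimum volume enclosing ellipsoid of $C$, $\mathcal{E}=\frac1d\mathcal{E}'$ (shrunk about its center), let $A$ be the (affine) invertible transformation mapping $\mathcal{E}$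 onto the Euclidean ball $B_\alpha(0)$ of radius $\alpha$ centered at $0$, and output $\mathrm{grid}(C,\alpha)=A^{-1}(\mathbb{Z}^d)\cap C$. *)

theory Defs
  imports "HOL-Analysis.Analysis"
begin

definition ellipsoid :: "real^'n \<Rightarrow> real^'n^'n \<Rightarrow> (real^'n) set" where
  "ellipsoid x0 V = {x0 + V *v u | u. norm u \<le> 1}"

definition is_mvee :: "(real^'n) set \<Rightarrow> real^'n \<Rightarrow> real^'n^'n \<Rightarrow> bool" where
  "is_mvee C x0 V \<longleftrightarrow> invertible V \<and> C \<subseteq> ellipsoid x0 V \<and>
     (\<forall>x1 W. invertible W \<and> C \<subseteq> ellipsoid x1 W \<longrightarrow>
        measure lebesgue (ellipsoid x0 V) \<le> measure lebesgue (ellipsoid x1 W))"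

definition john_center :: "(real^'n) set \<Rightarrow> real^'n" where
  "john_center C = fst (SOME p. is_mvee C (fst p) (snd p))"

definition john_matrix :: "(real^'n) set \<Rightarrow> real^'n^'n" where
  "john_matrix C = snd (SOME p. is_mvee C (fst p) (snd p))"

text \<open>Minkowski distance: d * sqrt((x-x0)^T (V V^T)^{-1} (x-x0)) = d * norm (V^{-1}(x-x0)).\<close>
definition mink_dist :: "real^'n::finite \<Rightarrow> (real^'n) set \<Rightarrow> real" where
  "mink_dist x C = real CARD('n) * norm (matrix_inv (john_matrix C) *v (x - john_center C))"

definition scaled_set :: "real \<Rightarrow> (real^'n) set \<Rightarrow> (real^'n) set" where
  "scaled_set b C = {y. mink_dist y C \<le> b}"

definition int_lattice :: "(real^'n) set" where
  "int_lattice = {z. \<forall>i. z $ i \<in> \<int>}"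

text \<open>G is a possible output of grid(C, alpha): for some John ellipsoid representation
  (x0,V) of C and some invertible affine map A y = M y + c mapping the shrunk
  ellipsoid (1/d) E' onto the closed ball of radius alpha, G = A^{-1}(Z^d) \<inter> C.\<close>
definition is_grid :: "(real^'n::finite) set \<Rightarrow> real \<Rightarrow> (real^'n) set \<Rightarrow> bool" where
  "is_grid C \<alpha> G \<longleftrightarrow> (\<exists>x0 V M c. is_mvee C x0 V \<and> invertible M \<and>
     (\<lambda>y. (M::real^'n^'n) *v y + c) ` ellipsoid x0 ((1 / real CARD('n)) *\<^sub>R (V::real^'n^'n)) = cball 0 \<alpha> \<and>
     G = {y \<in> C. M *v y + c \<in> int_lattice})"

end

theory Submission
  imports Defs
begin

proposition my_measure_linear_image:
 fixes f :: "real^'n \<Rightarrow> real^'n"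
  assumes "linear f" "S \<in> lmeasurable"
  shows "(f ` S) \<in> lmeasurable \<and> measure lebesgue (f ` S) = \<bar>det (matrix f)\<bar> * measure lebesgue S"
proof -
  let ?Q = "\<lambda>(f::real^'n \<Rightarrow> real^'n) (S::(real^'n) set). measure lebesgue (f ` S) = \<bar>det (matrix f)\<bar> * measure lebesgue S"
  have "\<forall>S \<in> lmeasurable. (f ` S) \<in> lmeasurable \<and> ?Q f S"
  proof (rule induct_linear_elementary [OF \<open>linear f\<close>]; intro ballI)
    fix f g and S :: "(real,'n) vec set"
    assume "linear f" and "linear g"
      and f [rule_format]: "\<forall>S \<in> lmeasurable. f ` S \<in> lmeasurable \<and> ?Q f S"
      and g [rule_format]: "\<forall>S \<in> lmeasurable. g ` S \<in> lmeasurable \<and> ?Q g S"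
      and S: "S \<in> lmeasurable"
    then have gS: "g ` S \<in> lmeasurable"
      by blast
    show "(f \<circ> g) ` S \<in> lmeasurable \<and> ?Q (f \<circ> g) S"
      using f [OF gS] g [OF S] matrix_compose [OF \<open>linear g\<close> \<open>linear f\<close>]
      by (simp add: o_def image_comp abs_mult det_mul)
  next
    fix f :: "real^'n::_ \<Rightarrow> real^'n::_" and i and S :: "(real^'n::_) set"
    assume "linear f" and 0: "\<And>x. f x $ i = 0" and "S \<in> lmeasurable"
    then have "\<not> inj f"
      by (metis (full_types) linear_injective_imp_surjective one_neq_zero surjE vec_component)
    have detf: "det (matrix f) = 0"
      using \<open>\<not> inj f\<close> det_nz_iff_inj[OF \<open>linear f\<close>] by blast
    show "f ` S \<in> lmeasurable \<and> ?Q f S"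
    proof
      show "f ` S \<in> lmeasurable"
        using lmeasurable_iff_indicator_has_integral \<open>linear f\<close> \<open>\<not> inj f\<close> negligible_UNIV negligible_linear_singular_image by blast
      have "measure lebesgue (f ` S) = 0"
        by (meson \<open>\<not> inj f\<close> \<open>linear f\<close> negligible_imp_measure0 negligible_linear_singular_image)
      also have "\<dots> = \<bar>det (matrix f)\<bar> * measure lebesgue S"
        by (simp add: detf)
      finally show "?Q f S" .
    qed
  next
    fix c and S :: "(real^'n::_) set"
    assume "S \<in> lmeasurable"
    show "(\<lambda>a. \<chi> i. c i * a $ i) ` S \<in> lmeasurable \<and> ?Q (\<lambda>a. \<chi> i. c i * a $ i) S"
    proof
      show "(\<lambda>a. \<chi> i. c i * a $ i) ` S \<in> lmeasurable"
        by (simp add: \<open>S \<in> lmeasurable\<close> measurable_stretch)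
      show "?Q (\<lambda>a. \<chi> i. c i * a $ i) S"
        by (simp add: measure_stretch [OF \<open>S \<in> lmeasurable\<close>, of c] axis_def matrix_def det_diagonal)
    qed
  next
    fix m :: "'n" and n :: "'n" and S :: "(real, 'n) vec set"
    assume "m \<noteq> n" and "S \<in> lmeasurable"
    let ?h = "\<lambda>v::(real, 'n) vec. \<chi> i. v $ Transposition.transpose m n i"
    have lin: "linear ?h"
      by (rule linearI) (simp_all add: plus_vec_def scaleR_vec_def)
    have meq: "measure lebesgue ((\<lambda>v::(real, 'n) vec. \<chi> i. v $ Transposition.transpose m n i) ` cbox a b)
             = measure lebesgue (cbox a b)" for a b
    proof (cases "cbox a b = {}")
      case True then show ?thesis
        by simp
    next
      case False
      then have him: "?h ` (cbox a b) \<noteq> {}"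
        by blast
      have eq: "?h ` (cbox a b) = cbox (?h a) (?h b)"
        by (auto simp: image_iff lambda_swap_Galois mem_box_cart) (metis transpose_involutory)+
      show ?thesis
        using him prod.permute [OF permutes_swap_id, where S=UNIV and g="\<lambda>i. (b - a)$i", symmetric]
        by (simp add: eq content_cbox_cart False)
    qed
    have "(\<chi> i j. if Transposition.transpose m n i = j then 1 else 0) = (\<chi> i j. if j = Transposition.transpose m n i then 1 else (0::real))"
      by (auto intro!: Cart_lambda_cong)
    then have "matrix ?h = transpose(\<chi> i j. mat 1 $ i $ Transposition.transpose m n j)"
      by (auto simp: matrix_eq transpose_def axis_def mat_def matrix_def)
    then have 1: "\<bar>det (matrix ?h)\<bar> = 1"
      by (simp add: det_permute_columns permutes_swap_id sign_swap_id abs_mult)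
    show "?h ` S \<in> lmeasurable \<and> ?Q ?h S"
      using measure_linear_sufficient [OF lin \<open>S \<in> lmeasurable\<close>] meq 1 by force
  next
    fix m n :: "'n" and S :: "(real, 'n) vec set"
    assume "m \<noteq> n" and "S \<in> lmeasurable"
    let ?h = "\<lambda>v::(real, 'n) vec. \<chi> i. if i = m then v $ m + v $ n else v $ i"
    have lin: "linear ?h"
      by (rule linearI) (auto simp: algebra_simps plus_vec_def scaleR_vec_def vec_eq_iff)
    have "matrix ?h = (\<chi> k. if k = m then row m (mat 1) + 1 *s row n (mat 1) else row k (mat 1))"
      by (auto simp: matrix_def axis_def row_def mat_def vec_eq_iff)
    then have 1: "det(matrix ?h) = 1"
      using det_row_operation[OF \<open>m \<noteq> n\<close>, of "mat 1" 1] by simp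
    have meq: "measure lebesgue (?h ` (cbox a b)) = measure lebesgue (cbox a b)" for a b
    proof (cases "cbox a b = {}")
      case True then show ?thesis by simp
    next
      case False
      then have ne: "(+) (\<chi> i. if i = n then - a $ n else 0) ` cbox a b \<noteq> {}"
        by auto
      let ?v = "\<chi> i. if i = n then - a $ n else 0"
      have "?h ` cbox a b
            = (+) (\<chi> i. if i = m \<or> i = n then a $ n else 0) ` ?h ` (+) ?v ` (cbox a b)"
        using \<open>m \<noteq> n\<close> unfolding image_comp o_def by (force simp: vec_eq_iff)
      then have "measure lebesgue (?h ` (cbox a b))
               = measure lebesgue ((\<lambda>v. \<chi> i. if i = m then v $ m + v $ n else v $ i) `
                                   (+) ?v ` cbox a b)"
        by (rule ssubst) (rule measure_translation)
      also have "\<dots> = measure lebesgue ((\<lambda>v. \<chi> i. if i = m then v $ m + v $ n else v $ i) ` cbox (?v +a) (?v + b))"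
        by (metis (no_types, lifting) cbox_translation)
      also have "\<dots> = measure lebesgue ((+) ?v ` cbox a b)"
        apply (subst measure_shear_interval)
        using \<open>m \<noteq> n\<close> ne apply auto
        apply (simp add: cbox_translation)
        by (metis cbox_borel cbox_translation measure_completion sets_lborel)
      also have "\<dots> = measure lebesgue (cbox a b)"
        by (rule measure_translation)
        finally show ?thesis .
      qed
    show "?h ` S \<in> lmeasurable \<and> ?Q ?h S"
      using measure_linear_sufficient [OF lin \<open>S \<in> lmeasurable\<close>] meq 1 by force
  qed
  with assms show ?thesis
    by metis
qed



lemma minv: assumes "invertible (A::real^'n^'n)"
  shows "A ** matrix_inv A = mat 1" "matrix_inv A ** A = mat 1"
proof -
  have "\<exists>A'. A ** A' = mat 1 \<and> A' ** A = mat 1" using assms unfolding invertible_def by blast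
  from someI_ex[OF this] show "A ** matrix_inv A = mat 1" "matrix_inv A ** A = mat 1"
    unfolding matrix_inv_def by auto
qed

lemma minv_vec: assumes "invertible (A::real^'n^'n)"
  shows "A *v (matrix_inv A *v x) = x" "matrix_inv A *v (A *v x) = x"
  using minv[OF assms] by (simp_all add: matrix_vector_mul_assoc)

lemma minv_invertible: assumes "invertible (A::real^'n^'n)" shows "invertible (matrix_inv A)"
  using minv[OF assms] unfolding invertible_def by blast

lemma det_minv: assumes "invertible (A::real^'n^'n)" shows "det (matrix_inv A) = 1 / det A"
proof -
  have "det A * det (matrix_inv A) = 1" using minv(1)[OF assms] det_mul[of A "matrix_inv A"] by simp
  moreover then have "det A \<noteq> 0" by auto
  ultimately show ?thesis by (simp add: field_simps)
qed

lemma ellipsoid_image: "ellipsoid x0 V = (\<lambda>u. x0 + V *v u) ` cball 0 1"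
  unfolding ellipsoid_def by (auto simp: dist_norm)

lemma measure_ellipsoid:
  "measure lebesgue (ellipsoid x0 (V::real^'n^'n)) = \<bar>det V\<bar> * measure lebesgue (cball (0::real^'n) 1)"
proof -
  have "ellipsoid x0 V = (+) x0 ` ((\<lambda>u. V *v u) ` cball 0 1)"
    unfolding ellipsoid_image by (auto simp: image_image)
  then have "measure lebesgue (ellipsoid x0 V) = measure lebesgue ((\<lambda>u. V *v u) ` cball 0 1)"
    by (simp add: measure_translation)
  also have "\<dots> = \<bar>det (matrix (\<lambda>u. V *v u))\<bar> * measure lebesgue (cball (0::real^'n) 1)"
    using my_measure_linear_image[of "\<lambda>u. V *v u" "cball 0 1"] matrix_vector_mul_linear
    by (auto simp: lmeasurable_cball)
  finally show ?thesis by simp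
qed

lemma ball_vol_pos: "measure lebesgue (cball (0::real^'n) 1) > 0"
  using content_cball_gt_0_iff[of "0::real^'n" 1] by simp

lemma ellipsoid_iff: assumes "invertible (V::real^'n^'n)"
  shows "y \<in> ellipsoid x0 V \<longleftrightarrow> norm (matrix_inv V *v (y - x0)) \<le> 1"
proof
  assume "y \<in> ellipsoid x0 V"
  then obtain u where "y = x0 + V *v u" "norm u \<le> 1" unfolding ellipsoid_def by auto
  then show "norm (matrix_inv V *v (y - x0)) \<le> 1" using minv_vec[OF assms] by simp
next
  assume "norm (matrix_inv V *v (y - x0)) \<le> 1"
  moreover have "y = x0 + V *v (matrix_inv V *v (y - x0))" using minv_vec[OF assms] by simp
  ultimately show "y \<in> ellipsoid x0 V" unfolding ellipsoid_def by blast
qed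



lemma inner_mv: "inner a ((V::real^'n^'m) *v w) = inner (transpose V *v a) w"
  by (simp add: inner_vec_def matrix_vector_mult_def transpose_def sum_distrib_left sum_distrib_right
      mult_ac) (rule sum.swap)

definition D0 :: "'n \<Rightarrow> real \<Rightarrow> real \<Rightarrow> real^'n^'n" where
  "D0 k a b = (\<chi> i j. if i = j then (if i = k then a else b) else 0)"

lemma D0_act: "D0 k a b *v v = b *\<^sub>R v + ((a - b) * v $ k) *\<^sub>R axis k 1"
proof -
  have "(D0 k a b *v v) $ i = (if i = k then a else b) * v $ i" for i
  proof -
    have "(D0 k a b *v v) $ i = (\<Sum>j\<in>UNIV. if i = j then (if i = k then a else b) * v $ j else 0)"
      unfolding D0_def matrix_vector_mult_def by (simp only: vec_lambda_beta) (rule sum.cong, auto)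
    also have "\<dots> = (if i = k then a else b) * v $ i" by (simp add: sum.delta)
    finally show ?thesis .
  qed
  then show ?thesis by (auto simp: vec_eq_iff axis_def algebra_simps)
qed

lemma D_act:
  assumes "orthogonal_matrix Q" "Q *v axis k 1 = u"
  shows "(Q ** D0 k a b ** transpose Q) *v w = b *\<^sub>R w + ((a - b) * inner u w) *\<^sub>R u"
proof -
  have k: "(transpose Q *v w) $ k = inner u w"
  proof -
    have "(transpose Q *v w) $ k = inner (axis k 1) (transpose Q *v w)"
      by (simp add: inner_axis')
    also have "\<dots> = inner (Q *v axis k 1) w"
      using inner_mv[of "axis k 1" "transpose Q" w] by (simp add: inner_commute)
    finally show ?thesis using assms(2) by simp
  qed
  have k2: "(w v* Q) $ k = inner u w" using k by simp
  have QQ: "Q ** transpose Q = mat 1" using assms(1) unfolding orthogonal_matrix_def by simp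
  have "(Q ** D0 k a b ** transpose Q) *v w = Q *v (D0 k a b *v (transpose Q *v w))"
    by (simp only: matrix_vector_mul_assoc matrix_mul_assoc)
  also have "\<dots> = b *\<^sub>R (Q *v (transpose Q *v w)) + ((a - b) * inner u w) *\<^sub>R (Q *v axis k 1)"
    by (simp add: D0_act k k2 matrix_vector_right_distrib matrix_vector_mult_scaleR)
  also have "Q *v (transpose Q *v w) = w" using QQ by (simp only: matrix_vector_mul_assoc matrix_vector_mul_lid)
  finally show ?thesis using assms(2) by simp
qed

lemma det_D0: "det (D0 k a b :: real^'n^'n) = a * b ^ (CARD('n) - 1)"
proof -
  have "det (D0 k a b :: real^'n^'n) = (\<Prod>i\<in>UNIV. if i = k then a else b)"
    by (subst det_diagonal) (auto simp: D0_def)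
  also have "\<dots> = a * (\<Prod>i\<in>UNIV - {k}. b)"
    by (subst prod.remove[of UNIV k]) auto
  also have "\<dots> = a * b ^ (CARD('n) - 1)"
    by (simp add: card_Diff_singleton)
  finally show ?thesis .
qed

lemma det_D:
  assumes "orthogonal_matrix (Q::real^'n^'n)"
  shows "det (Q ** D0 k a b ** transpose Q) = a * b ^ (CARD('n) - 1)"
proof -
  have "det Q * det Q = 1" using det_orthogonal_matrix[OF assms] by auto
  then show ?thesis by (simp add: det_mul det_D0 mult_ac)
qed



lemma poly_ineq:
  fixes x :: real assumes "0 \<le> x" "x \<le> 1"
  shows "(1 - x/32)^2 * (1 - x^2/8)^2 \<le> 1 - x*(1+3*x)/16"
proof -
  have e: "1 - x*(1+3*x)/16 - (1 - x/32)^2 * (1 - x^2/8)^2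
     = x^2*(63/1024) - x^3/64 - x^4*(63/4096) + x^5/1024 - x^6/65536"
    by (simp add: field_simps eval_nat_numeral)
  have "x^3 \<le> x^2" "x^4 \<le> x^2" "x^6 \<le> x^2" "0 \<le> x^5" "0 \<le> x^2"
    using assms by (auto intro!: power_decreasing)
  then have "0 \<le> x^2*(63/1024) - x^3/64 - x^4*(63/4096) + x^5/1024 - x^6/65536"
    by linarith
  with e show ?thesis by linarith
qed

definition "mmN (N::nat) = 4 * real N - 3"
definition "tauN N = 1 / (32 * mmN N)"
definition "dltN N = 1 / (8 * (mmN N)^2)"
definition "hhN (N::nat) = 3 / (4 * real N)"

lemma num_basic: assumes "N \<ge> 1"
  shows "mmN N \<ge> 1" "0 < tauN N" "tauN N \<le> 1/32" "0 < dltN N" "dltN N \<le> 1/8"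
    "0 < hhN N" "hhN N \<le> 3/4"
proof -
  show m: "mmN N \<ge> 1" using assms by (simp add: mmN_def)
  show "0 < tauN N" "tauN N \<le> 1/32" using m by (auto simp: tauN_def field_simps)
  have m2: "(mmN N)^2 \<ge> 1" using m by (simp add: one_le_power)
  then show "0 < dltN N" by (auto simp: dltN_def)
  have "1 / (8 * (mmN N)^2) \<le> 1 / (8 * 1)"
    using m2 by (intro divide_left_mono) auto
  then show "dltN N \<le> 1/8" by (simp add: dltN_def)
  show "0 < hhN N" "hhN N \<le> 3/4" using assms by (auto simp: hhN_def field_simps)
qed

lemma num_ii: assumes "N \<ge> 1"
  shows "(1 - hhN N) * (1 - tauN N)^2 * (1 - dltN N)^2 \<le> 1 - hhN N - 2 * tauN N"
proof -
  define m where "m = mmN N"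
  have m: "m \<ge> 1" using num_basic[OF assms] by (simp add: m_def)
  define x where "x = 1 / m"
  have x: "0 < x" "x \<le> 1" using m by (auto simp: x_def field_simps)
  have t: "tauN N = x/32" by (simp add: tauN_def x_def m_def)
  have d: "dltN N = x^2/8" by (simp add: dltN_def x_def m_def power2_eq_square)
  have h: "1 - hhN N = 1 / (1 + 3*x)"
    using assms m by (simp add: hhN_def x_def m_def mmN_def field_simps)
  have p: "(1 - tauN N)^2 * (1 - dltN N)^2 \<le> 1 - x*(1+3*x)/16"
    using poly_ineq[of x] x unfolding t d by simp
  have "0 \<le> 1 - hhN N" using num_basic[OF assms] by simp
  with p have "(1 - hhN N) * ((1 - tauN N)^2 * (1 - dltN N)^2) \<le> (1 - hhN N) * (1 - x*(1+3*x)/16)"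
    by (simp add: mult_left_mono)
  then have "(1 - hhN N) * (1 - tauN N)^2 * (1 - dltN N)^2 \<le> (1 - hhN N) * (1 - x*(1+3*x)/16)"
    by (simp add: mult.assoc)
  also have "\<dots> = (1 - hhN N) - ((1 - hhN N) * (1 + 3*x)) * x / 16"
    by (simp add: algebra_simps)
  also have "(1 - hhN N) * (1 + 3*x) = 1" by (subst h) (use x in simp)
  also have "(1 - hhN N) - 1 * x / 16 = 1 - hhN N - 2 * tauN N" using t by simp
  finally show ?thesis .
qed

lemma num_contain: assumes "N \<ge> 1" "-1 \<le> s" "s \<le> hhN N" "zz \<le> 1"
  shows "(zz - s^2) * (1 - dltN N)^2 + (s + tauN N)^2 / (1 - tauN N)^2 \<le> 1"
proof -
  note nb = num_basic[OF assms(1)]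
  define A where "A = 1 / (1 - tauN N)^2"
  define B where "B = (1 - dltN N)^2"
  define t where "t = tauN N"
  define h where "h = hhN N"
  have t: "0 < t" "t \<le> 1/32" using nb by (auto simp: t_def)
  have B: "0 \<le> B" "B \<le> 1" using nb by (auto simp: B_def power_le_one)
  have A: "A \<ge> 1"
  proof -
    have "(1-t)^2 \<le> 1" using t by (intro power_le_one) auto
    moreover have "0 < (1-t)^2" using t by auto
    ultimately show ?thesis by (simp add: A_def t_def[symmetric])
  qed
  have aA: "(1 - t)^2 * A = 1" using t by (simp add: A_def t_def)
  have ii: "(1 - h) * B \<le> (1 - h - 2 * t) * A"
  proof -
    have "(1 - h) * (1 - t)^2 * B \<le> 1 - h - 2 * t"
      using num_ii[OF assms(1)] by (simp add: h_def t_def B_def)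
    then have "(1 - h) * (1 - t)^2 * B * A \<le> (1 - h - 2 * t) * A"
      using A by (intro mult_right_mono) auto
    moreover have "(1 - h) * (1 - t)^2 * B * A = (1 - h) * B * ((1 - t)^2 * A)" by (simp add: ac_simps)
    ultimately show ?thesis using aA by simp
  qed
  have g: "(s + 2*t - 1) * A + (1 - s) * B \<le> 0"
  proof -
    have "(s + 2*t - 1) * A + (1 - s) * B = ((h + 2*t - 1) * A + (1 - h) * B) + (s - h) * (A - B)"
      by (simp add: algebra_simps)
    moreover have "(s - h) * (A - B) \<le> 0"
      using assms(3) A B by (intro mult_nonpos_nonneg) (auto simp: h_def)
    moreover have "(h + 2*t - 1) * A + (1 - h) * B \<le> 0" using ii by (simp add: algebra_simps)
    ultimately show ?thesis by linarith
  qed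
  have eq: "(1 - s^2) * B + (s + t)^2 * A - 1 = (s + 1) * ((s + 2*t - 1) * A + (1 - s) * B)"
  proof -
    have "(s + t)^2 * A - 1 = (s + t)^2 * A - (1 - t)^2 * A" using aA by simp
    also have "\<dots> = (s + 1) * (s + 2*t - 1) * A" by (simp add: algebra_simps power2_eq_square)
    finally show ?thesis by (simp add: algebra_simps power2_eq_square)
  qed
  have "(s + 1) * ((s + 2*t - 1) * A + (1 - s) * B) \<le> 0"
    using g assms(2) by (intro mult_nonneg_nonpos) auto
  then have "(1 - s^2) * B + (s + t)^2 * A \<le> 1" using eq by linarith
  moreover have "(zz - s^2) * B \<le> (1 - s^2) * B" using assms(4) B by (intro mult_right_mono) auto
  ultimately show ?thesis by (simp add: A_def B_def t_def divide_inverse)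
qed

lemma num_det: assumes "N \<ge> 1"
  shows "(1 - tauN N) * (1 / (1 - dltN N)) ^ (N - 1) < 1"
proof -
  note nb = num_basic[OF assms]
  define d where "d = dltN N"
  have d: "0 < d" "d \<le> 1/8" using nb by (auto simp: d_def)
  have bern: "1 + real (N - 1) * (- d) \<le> (1 + - d) ^ (N - 1)"
    by (rule Bernoulli_inequality) (use d in auto)
  have key: "real (N - 1) * d < tauN N"
  proof -
    have m: "mmN N \<ge> 1" using nb by simp
    have "real (N - 1) * d = (real N - 1) / (8 * (mmN N)^2)" using assms by (simp add: d_def dltN_def of_nat_diff)
    also have "\<dots> < 1 / (32 * mmN N)"
    proof -
      have l: "4 * (real N - 1) < mmN N" by (simp add: mmN_def)
      have "(real N - 1) * (32 * mmN N) < 8 * (mmN N)^2"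
        using mult_strict_right_mono[OF l, of "8 * mmN N"] m by (simp add: power2_eq_square algebra_simps)
      then show ?thesis using m by (simp add: field_simps)
    qed
    finally show ?thesis by (simp add: tauN_def)
  qed
  have pos: "0 < 1 - real (N - 1) * d" using key nb by linarith
  have "(1 - tauN N) < (1 - d) ^ (N - 1)" using bern key by simp
  moreover have pp: "0 < (1-d)^(N-1)" using d by simp
  ultimately have "(1 - tauN N) / (1-d)^(N-1) < 1" by (simp add: divide_less_eq_1_pos)
  then show ?thesis by (simp add: power_one_over d_def)
qed



lemma john_incl:
  fixes C :: "(real^'n) set"
  assumes conv: "convex C" and comp: "compact C" and mv: "is_mvee C x0 V"
    and z: "norm z \<le> hhN CARD('n)"
  shows "x0 + V *v z \<in> C"
proof (rule ccontr)
  assume y0: "x0 + V *v z \<notin> C"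
  define N where "N = CARD('n)"
  have N: "N \<ge> 1" by (simp add: N_def Suc_le_eq)
  note nb = num_basic[OF N]
  have invV: "invertible V" and sub: "C \<subseteq> ellipsoid x0 V"
    and minm: "\<And>x1 W. invertible W \<Longrightarrow> C \<subseteq> ellipsoid x1 W \<Longrightarrow>
        measure lebesgue (ellipsoid x0 V) \<le> measure lebesgue (ellipsoid x1 W)"
    using mv unfolding is_mvee_def by auto
  define P where "P = matrix_inv V"
  have xrep: "x = x0 + V *v (P *v (x - x0))" for x using minv_vec[OF invV] by (simp add: P_def)
  have xnorm: "norm (P *v (x - x0)) \<le> 1" if "x \<in> C" for x
    using sub that ellipsoid_iff[OF invV] by (auto simp: P_def)
  obtain a bb where ab: "inner a (x0 + V *v z) < bb" "\<forall>x\<in>C. inner a x > bb"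
    using separating_hyperplane_closed_point[OF conv compact_imp_closed[OF comp] y0] by blast
  define g where "g = transpose V *v a"
  have ga: "inner a (V *v w) = inner g w" for w using inner_mv[of a V w] by (simp add: g_def)
  have gC: "inner g (P *v (x - x0)) > inner g z" if "x \<in> C" for x
  proof -
    have "inner a x = inner a x0 + inner g (P *v (x - x0))"
      using arg_cong[OF xrep[of x], of "inner a"] by (simp add: inner_add_right ga)
    moreover have "inner a (x0 + V *v z) = inner a x0 + inner g z" by (simp add: inner_add_right ga)
    ultimately show ?thesis using ab that by auto
  qed
  obtain u where unit: "norm u = 1" and hu: "\<And>x. x \<in> C \<Longrightarrow> inner u (P *v (x - x0)) \<le> hhN N"
  proof (cases "g = 0")
    case True
    then have "C = {}" using gC by auto
    then show ?thesis using that[of "axis undefined 1"] by (simp add: norm_axis_1)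
  next
    case False
    define u where "u = (- 1 / norm g) *\<^sub>R g"
    have nu: "norm u = 1" using False by (simp add: u_def)
    have "inner u (P *v (x - x0)) \<le> hhN N" if "x \<in> C" for x
    proof -
      have "inner u (P *v (x - x0)) = - inner g (P *v (x - x0)) / norm g" by (simp add: u_def)
      also have "\<dots> < - inner g z / norm g"
        using gC[OF that] False by (simp add: divide_strict_right_mono)
      also have "\<dots> = inner u z" by (simp add: u_def)
      also have "\<dots> \<le> norm u * norm z" by (rule norm_cauchy_schwarz)
      also have "\<dots> \<le> hhN N" using nu z by (simp add: N_def)
      finally show ?thesis by simp
    qed
    then show ?thesis using that nu by blast
  qed
  obtain Q where oQ: "orthogonal_matrix Q" and Qk: "Q *v axis undefined 1 = u"
    using orthogonal_matrix_exists_basis[OF unit] by blast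
  define t where "t = tauN N"
  define aa where "aa = 1 - t"
  define b1 where "b1 = 1 - dltN N"
  have t: "0 < t" "t \<le> 1/32" using nb by (auto simp: t_def)
  have aa: "0 < aa" using t by (simp add: aa_def)
  have b1: "0 < b1" "b1 \<le> 1" using nb by (auto simp: b1_def)
  define D where "D = Q ** D0 undefined aa (1 / b1) ** transpose Q"
  have Dact: "D *v w = (1 / b1) *\<^sub>R w + ((aa - 1 / b1) * inner u w) *\<^sub>R u" for w
    unfolding D_def by (rule D_act[OF oQ Qk])
  have detD: "det D = aa * (1 / b1) ^ (N - 1)"
    unfolding D_def N_def by (rule det_D[OF oQ])
  have detD_lt: "\<bar>det D\<bar> < 1"
    using num_det[OF N] aa b1 by (simp add: detD aa_def t_def b1_def)
  have detD_pos: "det D \<noteq> 0" using aa b1 by (simp add: detD)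
  define W where "W = V ** D"
  define x1 where "x1 = x0 - t *\<^sub>R (V *v u)"
  have detW: "det W = det V * det D" by (simp add: W_def det_mul)
  have invW: "invertible W" using invV detD_pos by (simp add: invertible_det_nz detW)
  have subW: "C \<subseteq> ellipsoid x1 W"
  proof
    fix x assume xC: "x \<in> C"
    define zx where "zx = P *v (x - x0)"
    define s where "s = inner u zx"
    have zx1: "norm zx \<le> 1" using xnorm[OF xC] by (simp add: zx_def)
    have s1: "\<bar>s\<bar> \<le> 1"
      using Cauchy_Schwarz_ineq2[of u zx] unit zx1 by (simp add: s_def)
    have sh: "s \<le> hhN N" using hu[OF xC] by (simp add: s_def zx_def)
    define w where "w = b1 *\<^sub>R zx + ((s + t) / aa - b1 * s) *\<^sub>R u"
    have uu: "inner u u = 1" using unit by (simp add: dot_square_norm)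
    have uw: "inner u w = (s + t) / aa"
      by (simp add: w_def inner_add_right s_def uu)
    have Dw: "D *v w = zx + t *\<^sub>R u"
    proof -
      have e1: "D *v w = (1/b1) *\<^sub>R w + ((aa - 1/b1) * ((s+t)/aa)) *\<^sub>R u" by (simp only: Dact uw)
      have e2: "(1/b1) *\<^sub>R w = zx + ((1/b1) * ((s+t)/aa - b1 * s)) *\<^sub>R u"
        using b1 by (simp add: w_def scaleR_add_right)
      have "D *v w = zx + ((1 / b1) * ((s + t) / aa - b1 * s) + (aa - 1 / b1) * ((s + t) / aa)) *\<^sub>R u"
        unfolding e1 e2 by (simp add: scaleR_add_left)
      also have "(1 / b1) * ((s + t) / aa - b1 * s) + (aa - 1 / b1) * ((s + t) / aa) = t"
        using b1 aa by (simp add: field_simps)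
      finally show ?thesis .
    qed
    have "x = x1 + W *v w"
    proof -
      have "W *v w = V *v zx + t *\<^sub>R (V *v u)"
        by (simp add: W_def matrix_vector_mul_assoc[symmetric] Dw matrix_vector_right_distrib
            matrix_vector_mult_scaleR)
      then show ?thesis using xrep[of x] by (simp add: x1_def zx_def)
    qed
    moreover have "norm w \<le> 1"
    proof -
      have zz: "inner zx zx = norm zx * norm zx" by (simp add: dot_square_norm power2_eq_square)
      have "(norm w)^2 = inner w w" by (simp add: dot_square_norm)
      also have "\<dots> = ((norm zx)^2 - s^2) * b1^2 + (s + t)^2 / aa^2"
        by (simp add: w_def inner_add_left inner_add_right inner_commute[of zx u] s_def[symmetric]
             uu zz power2_eq_square algebra_simps add_divide_distrib diff_divide_distrib)
      also have "\<dots> \<le> 1"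
        using num_contain[OF N, of s "(norm zx)^2"] s1 sh zx1
        by (simp add: b1_def t_def aa_def abs_le_iff power_le_one)
      finally show ?thesis by (simp add: power_le_one_iff)
    qed
    ultimately show "x \<in> ellipsoid x1 W" unfolding ellipsoid_def by blast
  qed
  have "measure lebesgue (ellipsoid x1 W) < measure lebesgue (ellipsoid x0 V)"
  proof -
    have dV: "\<bar>det V\<bar> > 0" using invV by (simp add: invertible_det_nz)
    have "measure lebesgue (ellipsoid x1 W) = \<bar>det V\<bar> * \<bar>det D\<bar> * measure lebesgue (cball (0::real^'n) 1)"
      by (simp add: measure_ellipsoid detW abs_mult)
    also have "\<dots> < \<bar>det V\<bar> * 1 * measure lebesgue (cball (0::real^'n) 1)"
      using dV detD_lt ball_vol_pos by (intro mult_strict_right_mono mult_strict_left_mono) auto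
    also have "\<dots> = measure lebesgue (ellipsoid x0 V)" by (simp add: measure_ellipsoid)
    finally show ?thesis .
  qed
  with minm[OF invW subW] show False by linarith
qed



lemma cont_det[continuous_intros]:
  assumes "continuous_on S (f :: 'a::topological_space \<Rightarrow> real^'n^'n)"
  shows "continuous_on S (\<lambda>x. det (f x))"
  unfolding det_def by (intro continuous_intros assms)

lemma cont_mv[continuous_intros]:
  assumes "continuous_on S (f :: 'a::topological_space \<Rightarrow> real^'n^'m)" "continuous_on S g"
  shows "continuous_on S (\<lambda>x. f x *v g x)"
  unfolding matrix_vector_mult_def by (intro continuous_intros assms)

lemma mat_norm_bound:
  fixes P :: "real^'n^'n"
  assumes "\<And>v. norm (P *v v) \<le> c * norm v"
  shows "norm P \<le> real CARD('n) * real CARD('n) * c"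
proof -
  have ent: "\<bar>P $ i $ j\<bar> \<le> c" for i j
  proof -
    have "P $ i $ j = (P *v axis j 1) $ i"
      by (simp add: matrix_vector_mult_def axis_def if_distrib sum.delta' cong: if_cong)
    then have "\<bar>P $ i $ j\<bar> \<le> norm (P *v axis j 1)" by (simp add: component_le_norm_cart)
    also have "\<dots> \<le> c" using assms[of "axis j 1"] by (simp add: norm_axis_1)
    finally show ?thesis .
  qed
  have "norm P \<le> (\<Sum>i\<in>UNIV. norm (P $ i))"
    unfolding norm_vec_def by (rule L2_set_le_sum) auto
  also have "\<dots> \<le> (\<Sum>i\<in>(UNIV::'n set). real CARD('n) * c)"
  proof (rule sum_mono)
    fix i
    have "norm (P $ i) \<le> (\<Sum>j\<in>UNIV. \<bar>P $ i $ j\<bar>)" by (rule norm_le_l1_cart)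
    also have "\<dots> \<le> (\<Sum>j\<in>(UNIV::'n set). c)" using ent by (intro sum_mono) auto
    finally show "norm (P $ i) \<le> real CARD('n) * c" by simp
  qed
  finally show ?thesis by simp
qed



lemma mvee_exists:
  fixes C :: "(real^'n) set"
  assumes comp: "compact C" and int: "interior C \<noteq> {}"
  shows "\<exists>x0 V. is_mvee C x0 V"
proof -
  define N where "N = CARD('n)"
  obtain p where "p \<in> interior C" using int by blast
  then obtain r where r: "r > 0" "cball p r \<subseteq> C" using mem_interior_cball by blast
  obtain R where R: "R > 0" "\<And>x. x \<in> C \<Longrightarrow> norm x \<le> R"
    using compact_imp_bounded[OF comp] bounded_pos by blast
  define \<delta> where "\<delta> = (1 / R) ^ N"
  have \<delta>: "\<delta> > 0" using R by (simp add: \<delta>_def)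
  define feas where "feas = (\<lambda>(x0::real^'n, P::real^'n^'n). \<forall>y\<in>C. norm (P *v (y - x0)) \<le> 1)"
  define F where "F = {z. feas z \<and> \<delta> \<le> \<bar>det (snd z)\<bar>}"
  define BP where "BP = real N * real N * (2 / r)"
  have Pbound: "norm (P *v v) \<le> (2 / r) * norm v" if f: "feas (x0, P)" for x0 P v
  proof (cases "v = 0")
    case True then show ?thesis by simp
  next
    case False
    define v' where "v' = (r / norm v) *\<^sub>R v"
    have nv': "norm v' = r" using False r by (simp add: v'_def)
    have "p + v' \<in> C" "p \<in> C" using r nv' by (auto simp: dist_norm)
    then have "norm (P *v (p + v' - x0)) \<le> 1" "norm (P *v (p - x0)) \<le> 1"
      using f by (auto simp: feas_def)
    moreover have eq: "P *v v' = P *v (p + v' - x0) - P *v (p - x0)"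
      by (simp add: matrix_vector_mult_diff_distrib matrix_vector_right_distrib)
    moreover have "norm (P *v v') \<le> norm (P *v (p + v' - x0)) + norm (P *v (p - x0))"
      by (subst eq) (rule norm_triangle_ineq4)
    ultimately have "norm (P *v v') \<le> 2" by linarith
    moreover have "P *v v' = (r / norm v) *\<^sub>R (P *v v)" by (simp add: v'_def matrix_vector_mult_scaleR)
    ultimately have "(r / norm v) * norm (P *v v) \<le> 2" using r by simp
    then show ?thesis using r False by (simp add: field_simps)
  qed
  have PnormF: "norm (snd z) \<le> BP" if "z \<in> F" for z
    using that Pbound[of "fst z" "snd z"] mat_norm_bound[of "snd z" "2 / r"]
    by (cases z) (auto simp: F_def BP_def N_def)
  define K0 where "K0 = {P :: real^'n^'n. norm P \<le> BP \<and> \<delta> \<le> \<bar>det P\<bar>}"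
  have K0c: "compact K0"
  proof -
    have "closed K0" unfolding K0_def
      by (intro closed_Collect_conj closed_Collect_le continuous_intros)
    moreover have "bounded K0" unfolding K0_def bounded_iff by blast
    ultimately show ?thesis by (simp add: compact_eq_bounded_closed)
  qed
  obtain m0 where m0: "m0 > 0" "\<And>P v. P \<in> K0 \<Longrightarrow> m0 * norm v \<le> norm (P *v v)"
  proof (cases "K0 = {}")
    case True then show ?thesis using that[of 1] by auto
  next
    case False
    define S where "S = K0 \<times> sphere (0::real^'n) 1"
    have Sc: "compact S" unfolding S_def using K0c by (intro compact_Times) auto
    have Sne: "S \<noteq> {}" unfolding S_def using False
      by (auto simp: vector_choose_size[of 1] intro: exI[of _ "axis undefined 1"])
    have "continuous_on S (\<lambda>z. norm (fst z *v snd z))" by (intro continuous_intros)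
    then obtain z0 where z0: "z0 \<in> S" "\<And>z. z \<in> S \<Longrightarrow> norm (fst z0 *v snd z0) \<le> norm (fst z *v snd z)"
      using continuous_attains_inf[OF Sc Sne] by blast
    define m where "m = norm (fst z0 *v snd z0)"
    have "m > 0"
    proof -
      have "fst z0 \<in> K0" "norm (snd z0) = 1" using z0 by (auto simp: S_def)
      then have "det (fst z0) \<noteq> 0" "snd z0 \<noteq> 0" using \<delta> by (auto simp: K0_def)
      then have "fst z0 *v snd z0 \<noteq> 0"
        using inj_matrix_vector_mult[of "fst z0"] invertible_det_nz[of "fst z0"]
        by (metis injD matrix_vector_mult_0_right)
      then show ?thesis by (simp add: m_def)
    qed
    moreover have "m * norm v \<le> norm (P *v v)" if "P \<in> K0" for P v
    proof (cases "v = 0")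
      case True then show ?thesis by simp
    next
      case False
      have "(P, (1 / norm v) *\<^sub>R v) \<in> S" using that False by (simp add: S_def)
      then have "m \<le> norm (P *v ((1 / norm v) *\<^sub>R v))" using z0 by (auto simp: m_def)
      then have "m \<le> norm (P *v v) / norm v" by (simp add: matrix_vector_mult_scaleR)
      then show ?thesis using False by (simp add: field_simps)
    qed
    ultimately show ?thesis using that by blast
  qed
  have x0bound: "norm (fst z) \<le> norm p + 1 / m0" if "z \<in> F" for z
  proof -
    obtain x0 P where z: "z = (x0, P)" by (cases z)
    have "P \<in> K0" using PnormF[OF that] that by (auto simp: K0_def F_def z)
    moreover have "p \<in> C" using r by auto
    then have "norm (P *v (p - x0)) \<le> 1" using that by (auto simp: F_def feas_def z)
    ultimately have "m0 * norm (p - x0) \<le> 1" using m0 by (meson order_trans)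
    then have "norm (p - x0) \<le> 1 / m0" using m0 by (simp add: field_simps)
    then have "norm x0 \<le> norm p + 1 / m0" by (metis norm_triangle_sub order_trans add_le_cancel_left norm_minus_commute)
    then show ?thesis by (simp add: z)
  qed
  have Fc: "compact F"
  proof -
    have "F = (\<Inter>y\<in>C. {z. norm (snd z *v (y - fst z)) \<le> 1}) \<inter> {z. \<delta> \<le> \<bar>det (snd z)\<bar>}"
      by (auto simp: F_def feas_def)
    moreover have "closed \<dots>"
      by (intro closed_Int closed_INT ballI closed_Collect_le continuous_intros)
    ultimately have "closed F" by simp
    moreover have "bounded F"
    proof -
      have "F \<subseteq> cball 0 (norm p + 1 / m0) \<times> cball 0 BP"
        using x0bound PnormF by (auto simp: mem_Times_iff)
      then show ?thesis by (rule bounded_subset[OF bounded_Times[OF bounded_cball bounded_cball]])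
    qed
    ultimately show ?thesis by (simp add: compact_eq_bounded_closed)
  qed
  define Pr where "Pr = (1 / R) *\<^sub>R (mat 1 :: real^'n^'n)"
  have detPr: "det Pr = (1 / R) ^ N"
  proof -
    have "det Pr = (\<Prod>i\<in>(UNIV::'n set). 1 / R)"
      unfolding Pr_def by (subst det_diagonal) (auto simp: mat_def)
    then show ?thesis by (simp add: N_def)
  qed
  have PrF: "(0, Pr) \<in> F"
  proof -
    have "norm (Pr *v (y - 0)) \<le> 1" if "y \<in> C" for y
    proof -
      have "Pr *v (y - 0) = (1 / R) *\<^sub>R y"
        unfolding Pr_def by (simp add: scaleR_matrix_vector_assoc[symmetric])
      then show ?thesis using R(2)[OF that] R(1) by (simp add: field_simps)
    qed
    then show ?thesis using R by (auto simp: F_def feas_def detPr \<delta>_def)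
  qed
  have "continuous_on F (\<lambda>z. \<bar>det (snd z)\<bar>)" by (intro continuous_intros)
  then obtain zs where zs: "zs \<in> F" "\<And>z. z \<in> F \<Longrightarrow> \<bar>det (snd z)\<bar> \<le> \<bar>det (snd zs)\<bar>"
    using continuous_attains_sup[OF Fc] PrF by blast
  obtain x0 Ps where zsd: "zs = (x0, Ps)" by (cases zs)
  have dPs: "\<delta> \<le> \<bar>det Ps\<bar>" using zs by (simp add: F_def zsd)
  then have invPs: "invertible Ps" using \<delta> by (simp add: invertible_det_nz)
  define V where "V = matrix_inv Ps"
  have invV: "invertible V" by (simp add: V_def minv_invertible invPs)
  have VP: "matrix_inv V = Ps"
  proof -
    have "matrix_inv V = matrix_inv V ** (V ** Ps)" using minv(2)[OF invPs] by (simp add: V_def)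
    also have "\<dots> = Ps" using minv(2)[OF invV] by (simp add: matrix_mul_assoc)
    finally show ?thesis .
  qed
  have detV: "\<bar>det V\<bar> = 1 / \<bar>det Ps\<bar>" by (simp add: V_def det_minv invPs)
  have "is_mvee C x0 V"
    unfolding is_mvee_def
  proof (intro conjI allI impI)
    show "invertible V" by (rule invV)
    show "C \<subseteq> ellipsoid x0 V"
      using zs(1) by (auto simp: ellipsoid_iff[OF invV] VP F_def feas_def zsd)
    fix x1 W assume W: "invertible W \<and> C \<subseteq> ellipsoid x1 W"
    define P1 where "P1 = matrix_inv W"
    have invP1: "invertible P1" using W by (simp add: P1_def minv_invertible)
    have f1: "feas (x1, P1)" using W by (auto simp: feas_def P1_def ellipsoid_iff)
    have le: "\<bar>det P1\<bar> \<le> \<bar>det Ps\<bar>"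
    proof (cases "\<delta> \<le> \<bar>det P1\<bar>")
      case True then show ?thesis using zs(2)[of "(x1, P1)"] f1 by (simp add: F_def zsd)
    next
      case False then show ?thesis using dPs by simp
    qed
    have dW: "\<bar>det W\<bar> = 1 / \<bar>det P1\<bar>"
    proof -
      have "det P1 = 1 / det W" using W by (simp add: P1_def det_minv)
      then show ?thesis by (simp add: abs_divide)
    qed
    have p1: "0 < \<bar>det P1\<bar>" using invP1 by (simp add: invertible_det_nz)
    have "\<bar>det V\<bar> \<le> \<bar>det W\<bar>" unfolding detV dW using le p1 by (intro divide_left_mono) auto
    then show "measure lebesgue (ellipsoid x0 V) \<le> measure lebesgue (ellipsoid x1 W)"
      unfolding measure_ellipsoid using ball_vol_pos by (intro mult_right_mono) auto
  qed
  then show ?thesis by blast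
qed



lemma round_near: fixes p :: "real^'n"
  shows "\<exists>zr \<in> int_lattice. norm (zr - p) \<le> sqrt (real CARD('n)) / 2"
proof -
  define zr where "zr = (\<chi> i. (of_int (round (p $ i)) :: real))"
  have "zr \<in> int_lattice" by (simp add: zr_def int_lattice_def)
  moreover have "norm (zr - p) \<le> L2_set (\<lambda>i. 1/2) (UNIV::'n set)"
    unfolding norm_vec_def
  proof (rule L2_set_mono)
    fix i show "norm ((zr - p) $ i) \<le> 1/2" using of_int_round_abs_le[of "p $ i"] by (simp add: zr_def)
  qed auto
  moreover have "L2_set (\<lambda>i. 1/2) (UNIV::'n set) = sqrt (real CARD('n)) / 2"
    by (simp add: L2_set_def real_sqrt_mult real_sqrt_divide power2_eq_square)
  ultimately show ?thesis by auto
qed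

lemma vec_alg1:
  fixes y x s0 :: "'a::real_vector" assumes "t \<ge> 0"
  shows "y + t *\<^sub>R (y - x) - s0 = (1 + t) *\<^sub>R (y - (1 / (1 + t)) *\<^sub>R (s0 + t *\<^sub>R x))"
proof -
  have "(1 + t) *\<^sub>R ((1 / (1 + t)) *\<^sub>R (s0 + t *\<^sub>R x)) = s0 + t *\<^sub>R x" using assms by simp
  then show ?thesis by (simp add: scaleR_right_diff_distrib algebra_simps)
qed

lemma vec_alg3:
  fixes y s x c :: "'a::real_vector"
  assumes "y = a *\<^sub>R s + b *\<^sub>R x" "a + b = 1"
  shows "y - c = a *\<^sub>R (s - c) + b *\<^sub>R (x - c)"
proof -
  have "c = (a + b) *\<^sub>R c" using assms(2) by simp
  then show ?thesis using assms(1) by (simp add: algebra_simps)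
qed

lemma vec_alg2:
  fixes y x :: "'a::real_vector" assumes "t \<ge> 0"
  shows "y = (1 / (1 + t)) *\<^sub>R (y + t *\<^sub>R (y - x)) + (t / (1 + t)) *\<^sub>R x"
proof -
  have "(1 / (1 + t)) *\<^sub>R (y + t *\<^sub>R (y - x)) + (t / (1 + t)) *\<^sub>R x
      = (1 / (1 + t)) *\<^sub>R ((1 + t) *\<^sub>R y)"
    by (simp add: algebra_simps scaleR_add_right scaleR_diff_right divide_inverse)
  also have "\<dots> = y" using assms by simp
  finally show ?thesis by simp
qed

theorem mainTheorem2:
  fixes K K' :: "(real^'n) set" and \<beta> \<gamma> \<alpha> :: real and G :: "(real^'n) set"
  assumes "convex K" "compact K" "interior K \<noteq> {}"
    and "convex K'" "compact K'" "interior K' \<noteq> {}"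
    and "K' \<subseteq> K"
    and "\<beta> > \<gamma>" "\<gamma> > 1" "\<beta> > real CARD('n)"
    and "\<alpha> \<ge> 2 * (\<gamma> + 1) * \<beta>\<^sup>2 * sqrt (real CARD('n))"
    and "is_grid (scaled_set \<beta> K' \<inter> K) \<alpha> G"
  shows "(\<forall>x\<in>K'. \<exists>xg\<in>G. xg + \<gamma> *\<^sub>R (xg - x) \<in> scaled_set (1 / (2 * \<beta>)) K')
       \<and> (\<forall>x\<in>K - K'. \<exists>xg\<in>G.
            xg + (\<gamma> / mink_dist x K') *\<^sub>R (xg - x) \<in> scaled_set (1 / (2 * \<beta>)) K')"
proof -
  note convK = assms(1) and compK = assms(2) and convK' = assms(4) and compK' = assms(5)
    and intK' = assms(6) and sub = assms(7) and bg = assms(8) and g1 = assms(9) and bd = assms(10)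
    and alpha = assms(11) and grid = assms(12)
  define N where "N = CARD('n)"
  define d where "d = real N"
  have N1: "N \<ge> 1" by (simp add: N_def Suc_le_eq)
  have d1: "d \<ge> 1" using N1 by (simp add: d_def)
  have b1: "\<beta> > 1" using bg g1 by linarith
  have "\<exists>p. is_mvee K' (fst p) (snd p)" using mvee_exists[OF compK' intK'] by auto
  then have mvK: "is_mvee K' (john_center K') (john_matrix K')"
    unfolding john_center_def john_matrix_def by (rule someI_ex)
  define c where "c = john_center K'"
  define V where "V = john_matrix K'"
  define P where "P = matrix_inv V"
  have invV: "invertible V" using mvK by (simp add: is_mvee_def V_def)
  define nu where "nu = (\<lambda>v. d * norm (P *v v))"
  have md: "mink_dist y K' = nu (y - c)" for y
    by (simp add: mink_dist_def nu_def d_def N_def P_def V_def c_def)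
  have nu_add: "nu (a + b) \<le> nu a + nu b" for a b
    using norm_triangle_ineq[of "P *v a" "P *v b"] d1
    by (simp add: nu_def matrix_vector_right_distrib distrib_left[symmetric])
  have nu_scale: "nu (r *\<^sub>R a) = \<bar>r\<bar> * nu a" for r a
    by (simp add: nu_def matrix_vector_mult_scaleR)
  have nu_nonneg: "nu a \<ge> 0" for a using d1 by (simp add: nu_def)
  have nu_minus: "nu (- a) = nu a" for a using nu_scale[of "-1" a] by simp
  have nu_diff: "nu (a - b) \<le> nu a + nu b" for a b
    using nu_add[of a "- b"] nu_minus[of b] by simp
  have hh: "hhN N = 3 / (4 * d)" by (simp add: hhN_def d_def)
  have F1: "c + V *v z \<in> K'" if "norm z \<le> 3 / (4 * d)" for z
    using john_incl[OF convK' compK' mvK, of z] that hh by (simp add: c_def V_def N_def)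
  have F2: "norm (P *v (y - c)) \<le> 1" if "y \<in> K'" for y
    using mvK that ellipsoid_iff[OF invV] by (auto simp: is_mvee_def c_def V_def P_def)
  have yrep: "y = c + V *v (P *v (y - c))" for y using minv_vec[OF invV] by (simp add: P_def)
  have F4: "s \<in> K'" if "nu (s - c) \<le> 1 / (2 * \<beta>)" for s
  proof -
    have "d * norm (P *v (s - c)) \<le> 1 / (2 * \<beta>)" using that by (simp add: nu_def)
    also have "\<dots> \<le> 3 / 4" using b1 by (simp add: field_simps)
    finally have "norm (P *v (s - c)) \<le> 3 / (4 * d)" using d1 by (simp add: field_simps)
    then show ?thesis using F1 yrep[of s] by metis
  qed
  define C where "C = scaled_set \<beta> K' \<inter> K"
  have Cmem: "y \<in> C \<longleftrightarrow> nu (y - c) \<le> \<beta> \<and> y \<in> K" for y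
    by (simp add: C_def scaled_set_def md)
  have convC: "convex C"
  proof -
    have "convex {y. nu (y - c) \<le> \<beta>}"
      unfolding convex_def
    proof (intro allI impI ballI, clarsimp)
      fix x y u v :: real assume uv: "0 \<le> u" "0 \<le> v" "u + v = 1"
      fix x y assume xy: "nu (x - c) \<le> \<beta>" "nu (y - c) \<le> \<beta>"
      have "u *\<^sub>R x + v *\<^sub>R y - c = u *\<^sub>R (x - c) + v *\<^sub>R (y - c)"
        using uv by (simp add: algebra_simps flip: scaleR_add_left)
      then have "nu (u *\<^sub>R x + v *\<^sub>R y - c) \<le> u * nu (x - c) + v * nu (y - c)"
        using nu_add[of "u *\<^sub>R (x - c)" "v *\<^sub>R (y - c)"] uv by (simp add: nu_scale)
      also have "\<dots> \<le> u * \<beta> + v * \<beta>" using uv xy by (intro add_mono mult_left_mono) auto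
      finally show "nu (u *\<^sub>R x + v *\<^sub>R y - c) \<le> \<beta>" using uv by (simp add: distrib_right[symmetric])
    qed
    then show ?thesis using convK unfolding C_def by (simp add: scaled_set_def md convex_Int)
  qed
  have compC: "compact C"
  proof -
    have "closed {y. nu (y - c) \<le> \<beta>}" unfolding nu_def by (intro closed_Collect_le continuous_intros)
    then show ?thesis unfolding C_def using compK
      by (simp add: scaled_set_def md closed_Int_compact)
  qed
  from grid obtain x0' :: "real^'n" and V' M :: "real^'n^'n" and cc :: "real^'n" where mvC: "is_mvee C x0' V'" and invM: "invertible M"
    and img: "(\<lambda>y. M *v y + cc) ` ellipsoid x0' ((1 / d) *\<^sub>R V') = cball 0 \<alpha>"
    and Gdef: "G = {y \<in> C. M *v y + cc \<in> int_lattice}"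
    unfolding is_grid_def C_def d_def N_def by blast
  have JC: "nu (V' *v z) \<le> \<beta>" if "norm z \<le> 3 / (4 * d)" for z
  proof -
    have "x0' + V' *v z \<in> C" using john_incl[OF convC compC mvC, of z] that hh by (simp add: N_def)
    moreover have "x0' + V' *v (- z) \<in> C" using john_incl[OF convC compC mvC, of "- z"] that hh by (simp add: N_def)
    moreover have "V' *v (- z) = - (V' *v z)"
      using matrix_vector_mult_scaleR[of V' "-1" z] by simp
    ultimately have "nu (x0' + V' *v z - c) \<le> \<beta>" "nu (x0' - V' *v z - c) \<le> \<beta>"
      by (auto simp: Cmem)
    moreover have eq: "2 *\<^sub>R (V' *v z) = (x0' + V' *v z - c) - (x0' - V' *v z - c)"
      by (simp add: algebra_simps scaleR_2)
    have "nu (2 *\<^sub>R (V' *v z)) \<le> nu (x0' + V' *v z - c) + nu (x0' - V' *v z - c)"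
      by (subst eq) (rule nu_diff)
    ultimately show ?thesis by (simp add: nu_scale)
  qed
  have apos: "\<alpha> > 0"
  proof -
    have "2 * (\<gamma> + 1) * \<beta>\<^sup>2 * sqrt (real CARD('n)) > 0" using g1 b1 by simp
    then show ?thesis using alpha by linarith
  qed
  define Mi where "Mi = matrix_inv M"
  have Lip1: "nu (Mi *v w) \<le> 4 * \<beta> / 3" if "norm w = \<alpha>" for w
  proof -
    have "w \<in> cball 0 \<alpha>" "- w \<in> cball 0 \<alpha>" using that by auto
    then obtain e1 e2 where e1: "e1 \<in> ellipsoid x0' ((1 / d) *\<^sub>R V')" "M *v e1 + cc = w"
      and e2: "e2 \<in> ellipsoid x0' ((1 / d) *\<^sub>R V')" "M *v e2 + cc = - w"
      unfolding img[symmetric] by (metis (no_types, lifting) imageE)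
    obtain z1 z2 where z1: "e1 = x0' + ((1/d) *\<^sub>R V') *v z1" "norm z1 \<le> 1"
      and z2: "e2 = x0' + ((1/d) *\<^sub>R V') *v z2" "norm z2 \<le> 1"
      using e1(1) e2(1) unfolding ellipsoid_def by blast
    have m1: "M *v e1 = w - cc" using e1(2) by (simp add: eq_diff_eq)
    have m2: "M *v e2 = - w - cc" using e2(2) by (simp add: eq_diff_eq)
    have "M *v (e1 - e2) = 2 *\<^sub>R w" by (simp add: matrix_vector_mult_diff_distrib m1 m2 scaleR_2)
    then have "Mi *v (2 *\<^sub>R w) = e1 - e2" using minv_vec[OF invM] by (metis Mi_def)
    then have "2 *\<^sub>R (Mi *v w) = (8 / 3) *\<^sub>R (V' *v ((3 / (8 * d)) *\<^sub>R (z1 - z2)))"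
      using d1 by (simp add: z1 z2 matrix_vector_mult_scaleR scaleR_matrix_vector_assoc[symmetric]
            matrix_vector_mult_diff_distrib scaleR_diff_right)
    moreover have "norm ((3 / (8 * d)) *\<^sub>R (z1 - z2)) \<le> 3 / (4 * d)"
    proof -
      have "norm (z1 - z2) \<le> 2" using z1 z2 norm_triangle_ineq4[of z1 z2] by linarith
      moreover have "norm ((3 / (8 * d)) *\<^sub>R (z1 - z2)) = (3 / (8 * d)) * norm (z1 - z2)"
        using d1 by simp
      ultimately show ?thesis using d1 by (simp add: field_simps)
    qed
    ultimately have "2 * nu (Mi *v w) \<le> (8/3) * \<beta>"
      using JC[of "(3 / (8 * d)) *\<^sub>R (z1 - z2)"] nu_scale[of 2 "Mi *v w"]
        nu_scale[of "8/3" "V' *v ((3 / (8 * d)) *\<^sub>R (z1 - z2))"] by simp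
    then show ?thesis by simp
  qed
  have Lip: "nu (Mi *v w) \<le> (4 * \<beta> / (3 * \<alpha>)) * norm w" for w
  proof (cases "w = 0")
    case True then show ?thesis by (simp add: nu_def)
  next
    case False
    have "nu (Mi *v ((\<alpha> / norm w) *\<^sub>R w)) \<le> 4 * \<beta> / 3" using Lip1 False apos by simp
    then have "(\<alpha> / norm w) * nu (Mi *v w) \<le> 4 * \<beta> / 3"
      using apos by (simp add: matrix_vector_mult_scaleR nu_scale)
    then show ?thesis using apos False by (simp add: field_simps)
  qed
  define \<rho> where "\<rho> = 1 / (3 * \<beta> * (\<gamma> + 1))"
  have Xp: "0 < \<beta> * 3 + \<beta> * (\<gamma> * 3)" using b1 g1 by (intro add_pos_pos mult_pos_pos) auto
  have GRID: "\<exists>y. M *v y + cc \<in> int_lattice \<and> nu (y - q) \<le> \<rho>" for q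
  proof -
    obtain zr where zr: "zr \<in> int_lattice" "norm (zr - (M *v q + cc)) \<le> sqrt d / 2"
      using round_near[of "M *v q + cc"] by (auto simp: d_def N_def)
    define y where "y = Mi *v (zr - cc)"
    have My: "M *v y + cc = zr" using minv_vec[OF invM] by (simp add: y_def Mi_def)
    have "y - q = Mi *v (zr - (M *v q + cc))"
      using minv_vec[OF invM] by (simp add: y_def Mi_def matrix_vector_mult_diff_distrib algebra_simps)
    then have "nu (y - q) \<le> (4 * \<beta> / (3 * \<alpha>)) * norm (zr - (M *v q + cc))"
      using Lip[of "zr - (M *v q + cc)"] by simp
    also have "\<dots> \<le> (4 * \<beta> / (3 * \<alpha>)) * (sqrt d / 2)"
      using zr(2) apos b1 by (intro mult_left_mono) auto
    also have "\<dots> \<le> \<rho>"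
    proof -
      have sd: "sqrt d > 0" using d1 by simp
      have "2 * (\<gamma> + 1) * \<beta>\<^sup>2 * sqrt d \<le> \<alpha>" using alpha by (simp add: d_def N_def)
      then have key: "(2 * \<beta> * sqrt d) * (3 * \<beta> * (\<gamma> + 1)) \<le> 3 * \<alpha>"
        by (simp add: power2_eq_square algebra_simps)
      have X: "3 * \<beta> * (\<gamma> + 1) > 0" using b1 g1 by simp
      have "2 * \<beta> * sqrt d \<le> (1 / (3 * \<beta> * (\<gamma> + 1))) * (3 * \<alpha>)"
        using key X by (simp add: field_simps)
      then have "(2 * \<beta> * sqrt d) / (3 * \<alpha>) \<le> 1 / (3 * \<beta> * (\<gamma> + 1))"
        using apos by (intro mult_imp_div_pos_le) auto
      moreover have "(4 * \<beta> / (3 * \<alpha>)) * (sqrt d / 2) = (2 * \<beta> * sqrt d) / (3 * \<alpha>)" by simp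
      ultimately show ?thesis by (simp add: \<rho>_def)
    qed
    finally show ?thesis using My zr(1) by blast
  qed
  have inG: "y \<in> G" if "M *v y + cc \<in> int_lattice" "nu (y - c) \<le> \<beta>" "y \<in> K" for y
    using that by (simp add: Gdef Cmem)
  show ?thesis
  proof (intro conjI ballI)
    fix x assume xK': "x \<in> K'"
    have g0: "\<gamma> \<ge> 0" using g1 by simp
    define q where "q = (1 / (1 + \<gamma>)) *\<^sub>R (c + \<gamma> *\<^sub>R x)"
    obtain y where y: "M *v y + cc \<in> int_lattice" "nu (y - q) \<le> \<rho>" using GRID by blast
    define s where "s = y + \<gamma> *\<^sub>R (y - x)"
    have "s - c = (1 + \<gamma>) *\<^sub>R (y - q)" using vec_alg1[OF g0, of y x c] by (simp add: s_def q_def)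
    then have "nu (s - c) = (1 + \<gamma>) * nu (y - q)" using g0 by (simp add: nu_scale)
    also have "\<dots> \<le> (1 + \<gamma>) * \<rho>" using y(2) g0 by (intro mult_left_mono) auto
    also have "\<dots> = 1 / (3 * \<beta>)" using g1 b1 using Xp by (simp add: \<rho>_def field_simps)
    also have "\<dots> \<le> 1 / (2 * \<beta>)" using b1 by (intro divide_left_mono) auto
    finally have ns: "nu (s - c) \<le> 1 / (2 * \<beta>)" .
    have sK': "s \<in> K'" using F4[OF ns] .
    have yeq: "y = (1 / (1 + \<gamma>)) *\<^sub>R s + (\<gamma> / (1 + \<gamma>)) *\<^sub>R x"
      using vec_alg2[OF g0, of y x] by (simp add: s_def)
    have yK': "y \<in> K'" unfolding yeq
      by (rule convexD[OF convK' sK' xK']) (use g1 in \<open>auto simp: field_simps\<close>)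
    have "nu (y - c) \<le> d" using F2[OF yK'] d1 by (simp add: nu_def)
    also have "d \<le> \<beta>" using bd by (simp add: d_def N_def)
    finally have "y \<in> G" using inG[OF y(1)] yK' sub by auto
    moreover have "y + \<gamma> *\<^sub>R (y - x) \<in> scaled_set (1 / (2 * \<beta>)) K'"
      using ns by (simp add: scaled_set_def md s_def)
    ultimately show "\<exists>xg\<in>G. xg + \<gamma> *\<^sub>R (xg - x) \<in> scaled_set (1 / (2 * \<beta>)) K'" by blast
  next
    fix x assume x: "x \<in> K - K'"
    define m where "m = nu (x - c)"
    have m34: "m > 3/4"
    proof (rule ccontr)
      assume "\<not> m > 3/4"
      then have "norm (P *v (x - c)) \<le> 3 / (4 * d)" using d1 by (simp add: m_def nu_def field_simps)
      then have "x \<in> K'" using F1 yrep[of x] by metis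
      then show False using x by simp
    qed
    have mdx: "mink_dist x K' = m" by (simp add: md m_def)
    define t where "t = \<gamma> / m"
    have t0: "t \<ge> 0" "t > 0" using m34 g1 by (auto simp: t_def)
    have tm: "t * m = \<gamma>" using m34 by (simp add: t_def)
    have main: "\<exists>xg\<in>G. xg + t *\<^sub>R (xg - x) \<in> scaled_set (1 / (2 * \<beta>)) K'"
    proof (cases "m \<le> 2")
      case True
      define q where "q = (1 / (1 + t)) *\<^sub>R (c + t *\<^sub>R x)"
      obtain y where y: "M *v y + cc \<in> int_lattice" "nu (y - q) \<le> \<rho>" using GRID by blast
      define s where "s = y + t *\<^sub>R (y - x)"
      have "s - c = (1 + t) *\<^sub>R (y - q)" using vec_alg1[OF t0(1), of y x c] by (simp add: s_def q_def)
      then have "nu (s - c) = (1 + t) * nu (y - q)" using t0 by (simp add: nu_scale)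
      also have "\<dots> \<le> (1 + t) * \<rho>" using y(2) t0 by (intro mult_left_mono) auto
      also have "\<dots> \<le> 1 / (2 * \<beta>)"
      proof -
        have "\<gamma> * (3 * m - 2) \<ge> 0" using g1 m34 by simp
        then have "2 * (m + \<gamma>) \<le> 3 * m * (\<gamma> + 1)" using m34 by (simp add: algebra_simps)
        then have "2 * (1 + t) \<le> 3 * (\<gamma> + 1)" using m34 by (simp add: t_def field_simps)
        then have "(1 + t) * \<rho> \<le> (3 * (\<gamma> + 1) / 2) * \<rho>"
          using Xp b1 g1 by (intro mult_right_mono) (auto simp: \<rho>_def)
        also have "(3 * (\<gamma> + 1) / 2) * \<rho> = 1 / (2 * \<beta>)" using Xp g1 b1 by (simp add: \<rho>_def field_simps)
        finally show ?thesis .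
      qed
      finally have ns: "nu (s - c) \<le> 1 / (2 * \<beta>)" .
      have sK': "s \<in> K'" using F4[OF ns] .
      have yeq: "y = (1 / (1 + t)) *\<^sub>R s + (t / (1 + t)) *\<^sub>R x"
        using vec_alg2[OF t0(1), of y x] by (simp add: s_def)
      have yK: "y \<in> K" unfolding yeq
        by (rule convexD[OF convK _ ]) (use sK' sub x t0 in \<open>auto simp: field_simps\<close>)
      have "y - c = (1 / (1 + t)) *\<^sub>R (s - c) + (t / (1 + t)) *\<^sub>R (x - c)"
        by (rule vec_alg3[OF yeq]) (use t0 in \<open>simp add: field_simps\<close>)
      then have "nu (y - c) \<le> (1 / (1 + t)) * nu (s - c) + (t / (1 + t)) * nu (x - c)"
        using nu_add[of "(1 / (1 + t)) *\<^sub>R (s - c)" "(t / (1 + t)) *\<^sub>R (x - c)"] t0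
        by (simp add: nu_scale)
      also have "\<dots> \<le> (1 / (1 + t)) * (1 / (2 * \<beta>)) + (t / (1 + t)) * m"
        using ns t0 by (intro add_mono mult_left_mono) (auto simp: m_def)
      also have "\<dots> = (1 / (2 * \<beta>) + t * m) / (1 + t)" by (simp add: add_divide_distrib)
      also have "\<dots> = (1 / (2 * \<beta>) + \<gamma>) / (1 + t)" using tm by simp
      also have "\<dots> \<le> \<beta>"
      proof -
        have "\<beta> * \<gamma> / 2 \<le> \<beta> * \<gamma> / m" using True m34 b1 g1 by (intro divide_left_mono) auto
        moreover have "\<beta> * \<gamma> / m = \<beta> * t" by (simp add: t_def)
        moreover have "1 / (2 * \<beta>) \<le> 1 / 2" using b1 by simp
        moreover have "\<beta> * \<gamma> / 2 \<ge> 1 / 2"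
        proof -
          have "\<beta> * \<gamma> \<ge> 1 * 1" using b1 g1 by (intro mult_mono) auto
          then show ?thesis by simp
        qed
        ultimately have "1 / (2 * \<beta>) + \<gamma> \<le> \<beta> * (1 + t)" using bg by (simp add: algebra_simps)
        then show ?thesis using t0 by (simp add: field_simps)
      qed
      finally have "y \<in> G" using inG[OF y(1)] yK by auto
      moreover have "y + t *\<^sub>R (y - x) \<in> scaled_set (1 / (2 * \<beta>)) K'"
        using ns by (simp add: scaled_set_def md s_def)
      ultimately show ?thesis by blast
    next
      case False
      define lam where "lam = 1 / (4 * \<beta> * m)"
      define s0 where "s0 = c - lam *\<^sub>R (x - c)"
      define q where "q = (1 / (1 + t)) *\<^sub>R (s0 + t *\<^sub>R x)"
      obtain y where y: "M *v y + cc \<in> int_lattice" "nu (y - q) \<le> \<rho>" using GRID by blast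
      define s where "s = y + t *\<^sub>R (y - x)"
      have lam0: "lam > 0" using b1 m34 by (simp add: lam_def)
      have "s - s0 = (1 + t) *\<^sub>R (y - q)" using vec_alg1[OF t0(1), of y x s0] by (simp add: s_def q_def)
      then have "nu (s - s0) = (1 + t) * nu (y - q)" using t0 by (simp add: nu_scale)
      also have "\<dots> \<le> (1 + t) * \<rho>" using y(2) t0 by (intro mult_left_mono) auto
      also have "\<dots> \<le> 1 / (4 * \<beta>)"
      proof -
        have "(m - 2) * (3 * \<gamma> - 1) \<ge> 0" using False g1 by simp
        then have "4 * (m + \<gamma>) \<le> 3 * m * (\<gamma> + 1)" using g1 by (simp add: algebra_simps)
        then have "4 * (1 + t) \<le> 3 * (\<gamma> + 1)" using m34 by (simp add: t_def field_simps)
        then have "(1 + t) * \<rho> \<le> (3 * (\<gamma> + 1) / 4) * \<rho>"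
          using Xp b1 g1 by (intro mult_right_mono) (auto simp: \<rho>_def)
        also have "(3 * (\<gamma> + 1) / 4) * \<rho> = 1 / (4 * \<beta>)" using Xp g1 b1 by (simp add: \<rho>_def field_simps)
        finally show ?thesis .
      qed
      finally have ns0: "nu (s - s0) \<le> 1 / (4 * \<beta>)" .
      have "nu (s0 - c) = lam * m" using lam0 by (simp add: s0_def nu_minus nu_scale m_def)
      also have "\<dots> = 1 / (4 * \<beta>)" using m34 by (simp add: lam_def)
      finally have n0: "nu (s0 - c) = 1 / (4 * \<beta>)" .
      have "nu (s - c) \<le> nu (s - s0) + nu (s0 - c)" using nu_add[of "s - s0" "s0 - c"] by simp
      then have ns: "nu (s - c) \<le> 1 / (2 * \<beta>)" using ns0 n0 by simp
      have sK': "s \<in> K'" using F4[OF ns] .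
      have yeq: "y = (1 / (1 + t)) *\<^sub>R s + (t / (1 + t)) *\<^sub>R x"
        using vec_alg2[OF t0(1), of y x] by (simp add: s_def)
      have yK: "y \<in> K" unfolding yeq
        by (rule convexD[OF convK _ ]) (use sK' sub x t0 in \<open>auto simp: field_simps\<close>)
      have "y - c = (1 / (1 + t)) *\<^sub>R (s - c) + (t / (1 + t)) *\<^sub>R (x - c)"
        by (rule vec_alg3[OF yeq]) (use t0 in \<open>simp add: field_simps\<close>)
      also have "s - c = (s - s0) - lam *\<^sub>R (x - c)" by (simp add: s0_def)
      finally have "y - c = (1 / (1 + t)) *\<^sub>R (s - s0) + ((t - lam) / (1 + t)) *\<^sub>R (x - c)"
        by (simp add: algebra_simps diff_divide_distrib scaleR_diff_left)
      then have "nu (y - c) \<le> (1 / (1 + t)) * nu (s - s0) + \<bar>(t - lam) / (1 + t)\<bar> * nu (x - c)"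
        using nu_add[of "(1 / (1 + t)) *\<^sub>R (s - s0)" "((t - lam) / (1 + t)) *\<^sub>R (x - c)"] t0
        by (simp add: nu_scale)
      also have "\<bar>(t - lam) / (1 + t)\<bar> = (t - lam) / (1 + t)"
      proof -
        have "lam \<le> t"
        proof -
          have "\<beta> * \<gamma> \<ge> 1 * 1" using b1 g1 by (intro mult_mono) auto
          then have "1 / (4 * \<beta>) \<le> \<gamma>" using b1 g1 by (simp add: field_simps)
          then show ?thesis using m34 by (simp add: lam_def t_def field_simps)
        qed
        then show ?thesis using t0 by simp
      qed
      also have "(1 / (1 + t)) * nu (s - s0) + (t - lam) / (1 + t) * nu (x - c)
          \<le> (1 / (1 + t)) * (1 / (4 * \<beta>)) + (t - lam) / (1 + t) * m"
      proof -
        have "(1 / (1 + t)) * nu (s - s0) \<le> (1 / (1 + t)) * (1 / (4 * \<beta>))"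
          using ns0 t0 by (intro mult_left_mono) auto
        then show ?thesis by (simp add: m_def)
      qed
      also have "\<dots> = (1 / (4 * \<beta>) + (t * m - lam * m)) / (1 + t)"
        by (simp add: add_divide_distrib left_diff_distrib)
      also have "lam * m = 1 / (4 * \<beta>)" using m34 by (simp add: lam_def)
      also have "(1 / (4 * \<beta>) + (t * m - 1 / (4 * \<beta>))) / (1 + t) = \<gamma> / (1 + t)"
        using tm by simp
      also have "\<dots> \<le> \<gamma>" using t0 g1 by (simp add: field_simps)
      finally have "y \<in> G" using inG[OF y(1)] yK bg by auto
      moreover have "y + t *\<^sub>R (y - x) \<in> scaled_set (1 / (2 * \<beta>)) K'"
        using ns by (simp add: scaled_set_def md s_def)
      ultimately show ?thesis by blast
    qed
    then show "\<exists>xg\<in>G. xg + (\<gamma> / mink_dist x K') *\<^sub>R (xg - x) \<in> scaled_set (1 / (2 * \<beta>)) K'"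
      by (simp add: mdx t_def)
  qed
qed


end
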